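(* Let $R$ be a semisimple 2-primal ring. Then $R$ satisfies the complete radical formula if and only if $R$ satisfies the radical formula.
   Context: Rings are associative with identity; modules are unital left modules. $R$ is semisimple if ${}_RR$ is a direct sum of simple submodules; 2-primal if its set of nilpotent elements equals its prime radical. For an $R$-module $M$: a submodule $P$ is prime if $RM\not\subseteq P$ and for every ideal $A$ of $R$ and submodule $K$ with $AK\subseteq P$, $K\subseteq P$ or $AM\subseteq P$; completely prime if $RM\not\subseteq P$ and $rm\in P$ implies $m\in P$ or $rM\subseteq P$. $\beta^s(N)$ (resp. $\beta^s_{co}(N)$) is the intersection of all prime (resp. completely prime) submodules containing $N$ ($=M$ if none). $E_M(N)=\{rm: r^km\in N\text{ for some }k\in\mathbb N\}$, $\langle E_M(N)\rangle$ the submodule generated. $R$ satisfies the radical formula (resp. complete radical formula) if for every $R$-module $M$ and every submodule $N$, $\langle E_M(N)\rangle=\beta^s(N)$ (resp. $=\beta^s_{co}(N)$). *)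

theory Defs
  imports "HOL-Algebra.Algebra"
begin

text \<open>Unital left modules over a (not necessarily commutative) ring R, using the
  record type module of HOL-Algebra (whose locale requires commutativity, hence
  we use only its axioms part).\<close>

definition lmodule :: "('a, 'c) ring_scheme \<Rightarrow> ('a, 'm) module \<Rightarrow> bool" where
  "lmodule R M \<longleftrightarrow> ring R \<and> abelian_group M \<and> module_axioms R M"

definition submod :: "('a, 'c) ring_scheme \<Rightarrow> ('a, 'm) module \<Rightarrow> 'm set \<Rightarrow> bool" where
  "submod R M N \<longleftrightarrow> N \<subseteq> carrier M \<and> \<zero>\<^bsub>M\<^esub> \<in> N
     \<and> (\<forall>x\<in>N. \<forall>y\<in>N. x \<oplus>\<^bsub>M\<^esub> y \<in> N)
     \<and> (\<forall>r\<in>carrier R. \<forall>x\<in>N. r \<odot>\<^bsub>M\<^esub> x \<in> N)"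

definition mspan :: "('a, 'c) ring_scheme \<Rightarrow> ('a, 'm) module \<Rightarrow> 'm set \<Rightarrow> 'm set" where
  "mspan R M S = carrier M \<inter> \<Inter>{N. submod R M N \<and> S \<subseteq> N}"

definition smul_set :: "('a, 'm) module \<Rightarrow> 'a set \<Rightarrow> 'm set \<Rightarrow> 'm set" where
  "smul_set M A K = {a \<odot>\<^bsub>M\<^esub> k | a k. a \<in> A \<and> k \<in> K}"

definition prod_sm :: "('a, 'c) ring_scheme \<Rightarrow> ('a, 'm) module \<Rightarrow> 'a set \<Rightarrow> 'm set \<Rightarrow> 'm set" where
  "prod_sm R M A K = mspan R M (smul_set M A K)"

definition prime_submod :: "('a, 'c) ring_scheme \<Rightarrow> ('a, 'm) module \<Rightarrow> 'm set \<Rightarrow> bool" where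
  "prime_submod R M P \<longleftrightarrow> submod R M P
     \<and> \<not> prod_sm R M (carrier R) (carrier M) \<subseteq> P
     \<and> (\<forall>A K. ideal A R \<and> submod R M K \<and> prod_sm R M A K \<subseteq> P
              \<longrightarrow> K \<subseteq> P \<or> prod_sm R M A (carrier M) \<subseteq> P)"

definition cprime_submod :: "('a, 'c) ring_scheme \<Rightarrow> ('a, 'm) module \<Rightarrow> 'm set \<Rightarrow> bool" where
  "cprime_submod R M P \<longleftrightarrow> submod R M P
     \<and> \<not> prod_sm R M (carrier R) (carrier M) \<subseteq> P
     \<and> (\<forall>r\<in>carrier R. \<forall>m\<in>carrier M. r \<odot>\<^bsub>M\<^esub> m \<in> P
              \<longrightarrow> m \<in> P \<or> smul_set M {r} (carrier M) \<subseteq> P)"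

definition beta_s :: "('a, 'c) ring_scheme \<Rightarrow> ('a, 'm) module \<Rightarrow> 'm set \<Rightarrow> 'm set" where
  "beta_s R M N = (if \<exists>P. prime_submod R M P \<and> N \<subseteq> P
     then \<Inter>{P. prime_submod R M P \<and> N \<subseteq> P} else carrier M)"

definition beta_s_co :: "('a, 'c) ring_scheme \<Rightarrow> ('a, 'm) module \<Rightarrow> 'm set \<Rightarrow> 'm set" where
  "beta_s_co R M N = (if \<exists>P. cprime_submod R M P \<and> N \<subseteq> P
     then \<Inter>{P. cprime_submod R M P \<and> N \<subseteq> P} else carrier M)"

definition E_M :: "('a, 'c) ring_scheme \<Rightarrow> ('a, 'm) module \<Rightarrow> 'm set \<Rightarrow> 'm set" where
  "E_M R M N = {r \<odot>\<^bsub>M\<^esub> m | r m. r \<in> carrier R \<and> m \<in> carrier M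
                 \<and> (\<exists>k::nat. k \<ge> 1 \<and> (r [^]\<^bsub>R\<^esub> k) \<odot>\<^bsub>M\<^esub> m \<in> N)}"

text \<open>Radical formula / complete radical formula, for all modules whose carrier
  lives in the type 'm.\<close>
definition radical_formula :: "('a, 'c) ring_scheme \<Rightarrow> ('a, 'm) module itself \<Rightarrow> bool" where
  "radical_formula R _ \<longleftrightarrow> (\<forall>M :: ('a, 'm) module. \<forall>N. lmodule R M \<and> submod R M N
      \<longrightarrow> mspan R M (E_M R M N) = beta_s R M N)"

definition complete_radical_formula :: "('a, 'c) ring_scheme \<Rightarrow> ('a, 'm) module itself \<Rightarrow> bool" where
  "complete_radical_formula R _ \<longleftrightarrow> (\<forall>M :: ('a, 'm) module. \<forall>N. lmodule R M \<and> submod R M N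
      \<longrightarrow> mspan R M (E_M R M N) = beta_s_co R M N)"

definition regular_module :: "('a, 'c) ring_scheme \<Rightarrow> ('a, 'a) module" where
  "regular_module R = \<lparr>carrier = carrier R, monoid.mult = monoid.mult R, monoid.one = \<one>\<^bsub>R\<^esub>,
      ring.zero = \<zero>\<^bsub>R\<^esub>, ring.add = ring.add R, module.smult = monoid.mult R\<rparr>"

definition simple_submod :: "('a, 'c) ring_scheme \<Rightarrow> ('a, 'm) module \<Rightarrow> 'm set \<Rightarrow> bool" where
  "simple_submod R M S \<longleftrightarrow> submod R M S \<and> S \<noteq> {\<zero>\<^bsub>M\<^esub>}
     \<and> (\<forall>K. submod R M K \<and> K \<subseteq> S \<longrightarrow> K = {\<zero>\<^bsub>M\<^esub>} \<or> K = S)"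

text \<open>R_R is the (internal) direct sum of a family of simple submodules.\<close>
definition semisimple_ring :: "('a, 'c) ring_scheme \<Rightarrow> bool" where
  "semisimple_ring R \<longleftrightarrow> ring R \<and> (\<exists>\<S>. (\<forall>S\<in>\<S>. simple_submod R (regular_module R) S)
     \<and> mspan R (regular_module R) (\<Union>\<S>) = carrier R
     \<and> (\<forall>S\<in>\<S>. S \<inter> mspan R (regular_module R) (\<Union>(\<S> - {S})) = {\<zero>\<^bsub>R\<^esub>}))"

definition prime_ideal_nc :: "('a, 'c) ring_scheme \<Rightarrow> 'a set \<Rightarrow> bool" where
  "prime_ideal_nc R P \<longleftrightarrow> ideal P R \<and> P \<noteq> carrier R
     \<and> (\<forall>A B. ideal A R \<and> ideal B R \<and> genideal R {a \<otimes>\<^bsub>R\<^esub> b | a b. a \<in> A \<and> b \<in> B} \<subseteq> P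
             \<longrightarrow> A \<subseteq> P \<or> B \<subseteq> P)"

definition prime_radical :: "('a, 'c) ring_scheme \<Rightarrow> 'a set" where
  "prime_radical R = carrier R \<inter> \<Inter>{P. prime_ideal_nc R P}"

definition nilpotents :: "('a, 'c) ring_scheme \<Rightarrow> 'a set" where
  "nilpotents R = {a \<in> carrier R. \<exists>n::nat. a [^]\<^bsub>R\<^esub> n = \<zero>\<^bsub>R\<^esub>}"

definition two_primal :: "('a, 'c) ring_scheme \<Rightarrow> bool" where
  "two_primal R \<longleftrightarrow> nilpotents R = prime_radical R"

end

theory Submission
  imports Defs
begin


definition splus :: "('a, 'c) ring_scheme \<Rightarrow> 'a set \<Rightarrow> 'a set \<Rightarrow> 'a set" where
  "splus R A B = {a \<oplus>\<^bsub>R\<^esub> b | a b. a \<in> A \<and> b \<in> B}"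

fun sumsl :: "('a, 'c) ring_scheme \<Rightarrow> 'a set list \<Rightarrow> 'a set" where
  "sumsl R [] = {\<zero>\<^bsub>R\<^esub>}"
| "sumsl R (S # Ss) = splus R S (sumsl R Ss)"

definition lid :: "('a, 'c) ring_scheme \<Rightarrow> 'a set \<Rightarrow> bool" where
  "lid R L \<longleftrightarrow> L \<subseteq> carrier R \<and> \<zero>\<^bsub>R\<^esub> \<in> L \<and> (\<forall>x\<in>L. \<forall>y\<in>L. x \<oplus>\<^bsub>R\<^esub> y \<in> L)
     \<and> (\<forall>r\<in>carrier R. \<forall>x\<in>L. r \<otimes>\<^bsub>R\<^esub> x \<in> L)"

lemma submod_regular: "submod R (regular_module R) L = lid R L"
  by (simp add: submod_def lid_def regular_module_def)

context ring begin

lemma lid_neg: "lid R L \<Longrightarrow> x \<in> L \<Longrightarrow> \<ominus> x \<in> L"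
proof -
  assume l: "lid R L" and x: "x \<in> L"
  have xc: "x \<in> carrier R" using l x by (auto simp: lid_def)
  have "(\<ominus> \<one>) \<otimes> x \<in> L" using l x by (auto simp: lid_def)
  thus ?thesis using xc by (simp add: l_minus)
qed

lemma lid_minus: "lid R L \<Longrightarrow> x \<in> L \<Longrightarrow> y \<in> L \<Longrightarrow> x \<ominus> y \<in> L"
  using lid_neg by (auto simp: lid_def minus_eq)

lemma lid_splus: "lid R A \<Longrightarrow> lid R B \<Longrightarrow> lid R (splus R A B)"
proof -
  assume a: "lid R A" and b: "lid R B"
  have ac: "A \<subseteq> carrier R" and bc: "B \<subseteq> carrier R" using a b by (auto simp: lid_def)
  show ?thesis unfolding lid_def splus_def
  proof (intro conjI ballI)
    show "{a \<oplus> b |a b. a \<in> A \<and> b \<in> B} \<subseteq> carrier R" using ac bc by auto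
    show "\<zero> \<in> {a \<oplus> b |a b. a \<in> A \<and> b \<in> B}" using a b
      by (auto simp: lid_def intro!: exI[of _ \<zero>])
  next
    fix x y assume "x \<in> {a \<oplus> b |a b. a \<in> A \<and> b \<in> B}" "y \<in> {a \<oplus> b |a b. a \<in> A \<and> b \<in> B}"
    then obtain a1 b1 a2 b2 where x: "x = a1 \<oplus> b1" "a1 \<in> A" "b1 \<in> B"
      and y: "y = a2 \<oplus> b2" "a2 \<in> A" "b2 \<in> B" by blast
    have "x \<oplus> y = (a1 \<oplus> a2) \<oplus> (b1 \<oplus> b2)" using x y ac bc
      by (simp add: a_ac subsetD)
    moreover have "a1 \<oplus> a2 \<in> A" "b1 \<oplus> b2 \<in> B" using a b x y by (auto simp: lid_def)
    ultimately show "x \<oplus> y \<in> {a \<oplus> b |a b. a \<in> A \<and> b \<in> B}" by blast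
  next
    fix r x assume r: "r \<in> carrier R" and "x \<in> {a \<oplus> b |a b. a \<in> A \<and> b \<in> B}"
    then obtain a1 b1 where x: "x = a1 \<oplus> b1" "a1 \<in> A" "b1 \<in> B" by blast
    have "r \<otimes> x = r \<otimes> a1 \<oplus> r \<otimes> b1" using x ac bc r by (simp add: r_distr subsetD)
    moreover have "r \<otimes> a1 \<in> A" "r \<otimes> b1 \<in> B" using a b x r by (auto simp: lid_def)
    ultimately show "r \<otimes> x \<in> {a \<oplus> b |a b. a \<in> A \<and> b \<in> B}" by blast
  qed
qed

lemma lid_sumsl: "\<forall>S\<in>set Ss. lid R S \<Longrightarrow> lid R (sumsl R Ss)"
proof (induction Ss)
  case Nil then show ?case by (simp add: lid_def)
next
  case (Cons S Ss) then show ?case by (simp add: lid_splus)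
qed

lemma sumsl_app: "\<forall>S\<in>set Ss1. lid R S \<Longrightarrow> \<forall>S\<in>set Ss2. lid R S \<Longrightarrow>
   x \<in> sumsl R Ss1 \<Longrightarrow> y \<in> sumsl R Ss2 \<Longrightarrow> x \<oplus> y \<in> sumsl R (Ss1 @ Ss2)"
proof (induction Ss1 arbitrary: x)
  case Nil
  have "y \<in> carrier R" using lid_sumsl[OF Nil(2)] Nil(4) by (auto simp: lid_def)
  then show ?case using Nil by simp
next
  case (Cons S Ss)
  obtain a b where x: "x = a \<oplus> b" "a \<in> S" "b \<in> sumsl R Ss" using Cons(4) by (auto simp: splus_def)
  have ac: "a \<in> carrier R" using Cons(2) x by (auto simp: lid_def)
  have bc: "b \<in> carrier R" using lid_sumsl[of Ss] Cons(2) x by (auto simp: lid_def)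
  have yc: "y \<in> carrier R" using lid_sumsl[OF Cons(3)] Cons(5) by (auto simp: lid_def)
  have "b \<oplus> y \<in> sumsl R (Ss @ Ss2)" using Cons x by auto
  moreover have "x \<oplus> y = a \<oplus> (b \<oplus> y)" using x ac bc yc by (simp add: a_assoc)
  ultimately show ?case using x by (auto simp: splus_def)
qed

lemma one_in_sumsl:
  assumes "\<forall>S\<in>SS. lid R S" and "\<one> \<in> mspan R (regular_module R) (\<Union>SS)"
  shows "\<exists>Ss. set Ss \<subseteq> SS \<and> \<one> \<in> sumsl R Ss"
proof -
  define T where "T = {x. \<exists>Ss. set Ss \<subseteq> SS \<and> x \<in> sumsl R Ss}"
  have "lid R T" unfolding lid_def
  proof (intro conjI ballI)
    show "T \<subseteq> carrier R"
    proof
      fix x assume "x \<in> T"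
      then obtain S1 where "set S1 \<subseteq> SS" "x \<in> sumsl R S1" by (auto simp: T_def)
      moreover have "lid R (sumsl R S1)" using lid_sumsl[of S1] assms(1) \<open>set S1 \<subseteq> SS\<close> by blast
      ultimately show "x \<in> carrier R" unfolding lid_def by blast
    qed
    show "\<zero> \<in> T" unfolding T_def by (rule CollectI, rule exI[of _ "[]"]) simp
  next
    fix x y assume "x \<in> T" "y \<in> T"
    then obtain S1 S2 where "set S1 \<subseteq> SS" "x \<in> sumsl R S1" "set S2 \<subseteq> SS" "y \<in> sumsl R S2"
      by (auto simp: T_def)
    then show "x \<oplus> y \<in> T" unfolding T_def using sumsl_app[of S1 S2 x y] assms(1)
      by (intro CollectI exI[of _ "S1 @ S2"]) auto
  next
    fix r x assume r: "r \<in> carrier R" and "x \<in> T"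
    then obtain S1 where "set S1 \<subseteq> SS" "x \<in> sumsl R S1" by (auto simp: T_def)
    moreover have "lid R (sumsl R S1)" using lid_sumsl[of S1] assms(1) \<open>set S1 \<subseteq> SS\<close> by blast
    ultimately show "r \<otimes> x \<in> T" unfolding T_def using r
      by (intro CollectI exI[of _ S1]) (auto simp: lid_def)
  qed
  moreover have "\<Union>SS \<subseteq> T"
  proof
    fix x assume "x \<in> \<Union>SS"
    then obtain S where S: "S \<in> SS" "x \<in> S" by blast
    then have "x \<in> carrier R" "\<zero> \<in> S" using assms(1) by (auto simp: lid_def)
    then have "x \<in> sumsl R [S]" using S by (auto simp: splus_def intro!: exI[of _ x])
    then show "x \<in> T" using S by (auto simp: T_def intro!: exI[of _ "[S]"])
  qed
  ultimately have "\<one> \<in> T" using assms(2) by (auto simp: mspan_def submod_regular)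
  then show ?thesis by (auto simp: T_def)
qed

end


lemma simple_regular: "simple_submod R (regular_module R) S \<longleftrightarrow>
   lid R S \<and> S \<noteq> {\<zero>\<^bsub>R\<^esub>} \<and> (\<forall>K. lid R K \<and> K \<subseteq> S \<longrightarrow> K = {\<zero>\<^bsub>R\<^esub>} \<or> K = S)"
  by (simp add: simple_submod_def submod_regular) (simp add: regular_module_def)

context ring begin

lemma lid_inter: "lid R A \<Longrightarrow> lid R B \<Longrightarrow> lid R (A \<inter> B)"
  by (auto simp: lid_def)

lemma complement:
  assumes L: "lid R L" and Ss: "\<forall>S\<in>set Ss. simple_submod R (regular_module R) S"
  shows "\<exists>C. lid R C \<and> L \<inter> C \<subseteq> {\<zero>} \<and> sumsl R Ss \<subseteq> splus R L C"
  using Ss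
proof (induction Ss)
  case Nil
  have "lid R {\<zero>}" by (auto simp: lid_def)
  moreover have "sumsl R [] \<subseteq> splus R L {\<zero>}" using L
    by (auto simp: splus_def lid_def intro!: exI[of _ \<zero>])
  ultimately show ?case by blast
next
  case (Cons S Ss)
  then obtain C where C: "lid R C" "L \<inter> C \<subseteq> {\<zero>}" "sumsl R Ss \<subseteq> splus R L C" by auto
  have S: "lid R S" "\<forall>K. lid R K \<and> K \<subseteq> S \<longrightarrow> K = {\<zero>} \<or> K = S"
    using Cons(2) by (auto simp: simple_regular)
  have LC: "lid R (splus R L C)" using lid_splus L C(1) by blast
  have Lc: "L \<subseteq> carrier R" and Cc: "C \<subseteq> carrier R" and Sc: "S \<subseteq> carrier R"
    using L C(1) S(1) by (auto simp: lid_def)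
  have D: "lid R (S \<inter> splus R L C)" using lid_inter S(1) LC by blast
  then have "S \<inter> splus R L C = {\<zero>} \<or> S \<inter> splus R L C = S" using S(2) by blast
  then show ?case
  proof
    assume Sin: "S \<inter> splus R L C = S"
    have "sumsl R (S # Ss) \<subseteq> splus R L C"
    proof
      fix x assume "x \<in> sumsl R (S # Ss)"
      then obtain a b where "x = a \<oplus> b" "a \<in> S" "b \<in> sumsl R Ss" by (auto simp: splus_def)
      moreover have "a \<in> splus R L C" using Sin \<open>a \<in> S\<close> by blast
      ultimately show "x \<in> splus R L C" using LC C(3) by (auto simp: lid_def)
    qed
    then show ?thesis using C by blast
  next
    assume S0: "S \<inter> splus R L C = {\<zero>}"
    have "lid R (splus R C S)" using lid_splus C(1) S(1) by blast
    moreover have "L \<inter> splus R C S \<subseteq> {\<zero>}"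
    proof
      fix l assume "l \<in> L \<inter> splus R C S"
      then obtain c s where l: "l \<in> L" "l = c \<oplus> s" "c \<in> C" "s \<in> S" by (auto simp: splus_def)
      have lc: "l \<in> carrier R" "c \<in> carrier R" "s \<in> carrier R" using l Lc Cc Sc by auto
      have "l \<oplus> (\<ominus> c) = (s \<oplus> c) \<oplus> (\<ominus> c)" using l lc by (simp add: a_comm)
      also have "\<dots> = s \<oplus> (c \<oplus> (\<ominus> c))" using lc by (simp add: a_assoc)
      also have "\<dots> = s" using lc by (simp add: r_neg)
      finally have "s = l \<oplus> (\<ominus> c)" by simp
      moreover have "\<ominus> c \<in> C" using lid_neg C(1) l by blast
      ultimately have "s \<in> splus R L C" using l by (auto simp: splus_def)
      then have "s = \<zero>" using S0 l by blast
      then have "l = c" using l lc by simp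
      then show "l \<in> {\<zero>}" using C(2) l by blast
    qed
    moreover have "sumsl R (S # Ss) \<subseteq> splus R L (splus R C S)"
    proof
      fix x assume "x \<in> sumsl R (S # Ss)"
      then obtain a b where x: "x = a \<oplus> b" "a \<in> S" "b \<in> sumsl R Ss" by (auto simp: splus_def)
      then obtain l c where b: "b = l \<oplus> c" "l \<in> L" "c \<in> C" using C(3) by (auto simp: splus_def)
      have "a \<in> carrier R" "l \<in> carrier R" "c \<in> carrier R" using x b Lc Cc Sc by auto
      then have "x = l \<oplus> (c \<oplus> a)" using x b by (simp add: a_ac)
      then show "x \<in> splus R L (splus R C S)" using x b by (auto simp: splus_def)
    qed
    ultimately show ?thesis by blast
  qed
qed

lemma idem_gen:
  assumes ss: "semisimple_ring R" and L: "lid R L"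
  shows "\<exists>e\<in>L. \<forall>x\<in>L. x \<otimes> e = x"
proof -
  obtain SS where SS: "\<forall>S\<in>SS. simple_submod R (regular_module R) S"
    "mspan R (regular_module R) (\<Union>SS) = carrier R"
    using ss unfolding semisimple_ring_def by blast
  have l1: "\<forall>S\<in>SS. lid R S" using SS(1) by (auto simp: simple_regular)
  have l2: "\<one> \<in> mspan R (regular_module R) (\<Union>SS)" using SS(2) by simp
  obtain Ss where Ss: "set Ss \<subseteq> SS" "\<one> \<in> sumsl R Ss"
    using one_in_sumsl[OF l1 l2] by (elim exE conjE)
  obtain C where C: "lid R C" "L \<inter> C \<subseteq> {\<zero>}" "sumsl R Ss \<subseteq> splus R L C"
    using complement[OF L, of Ss] Ss SS(1) by auto
  obtain e f where ef: "\<one> = e \<oplus> f" "e \<in> L" "f \<in> C" using C(3) Ss(2) by (auto simp: splus_def)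
  have Lc: "L \<subseteq> carrier R" and Cc: "C \<subseteq> carrier R" using L C(1) by (auto simp: lid_def)
  have ec: "e \<in> carrier R" "f \<in> carrier R" using ef Lc Cc by auto
  show ?thesis
  proof (intro bexI[OF _ ef(2)] ballI)
    fix x assume x: "x \<in> L"
    have xc: "x \<in> carrier R" using x Lc by auto
    have "x = x \<otimes> e \<oplus> x \<otimes> f" using ef ec xc by (metis r_distr r_one)
    moreover have xe: "x \<otimes> e \<in> L" using L ef xc by (auto simp: lid_def)
    moreover have "x \<otimes> f \<in> C" using C(1) ef xc by (auto simp: lid_def)
    moreover have eqm: "x \<ominus> x \<otimes> e = x \<otimes> f"
    proof -
      have "x \<ominus> x \<otimes> e = (x \<otimes> e \<oplus> x \<otimes> f) \<oplus> \<ominus> (x \<otimes> e)"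
        using calculation(1) by (simp add: minus_eq)
      also have "\<dots> = (x \<otimes> f \<oplus> x \<otimes> e) \<oplus> \<ominus> (x \<otimes> e)" using ec xc by (simp add: a_comm)
      also have "\<dots> = x \<otimes> f \<oplus> (x \<otimes> e \<oplus> \<ominus> (x \<otimes> e))" using ec xc by (simp add: a_assoc)
      also have "\<dots> = x \<otimes> f" using ec xc by (simp add: r_neg)
      finally show ?thesis .
    qed
    moreover have "x \<otimes> f \<in> L" using lid_minus[OF L x xe] eqm by (simp only:)
    ultimately have "x \<otimes> f \<in> L \<inter> C" by blast
    then have "x \<otimes> f = \<zero>" using C(2) by blast
    then show "x \<otimes> e = x" using \<open>x = x \<otimes> e \<oplus> x \<otimes> f\<close> ec xc by simp
  qed
qed

end


context ring begin

lemma sub0_eq: "a \<in> carrier R \<Longrightarrow> b \<in> carrier R \<Longrightarrow> a \<ominus> b = \<zero> \<Longrightarrow> a = b"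
proof -
  assume a: "a \<in> carrier R" and b: "b \<in> carrier R" and z: "a \<ominus> b = \<zero>"
  have "a = a \<oplus> (\<ominus> b \<oplus> b)" using a b by (simp add: l_neg)
  also have "\<dots> = (a \<ominus> b) \<oplus> b" using a b by (simp add: minus_eq a_assoc)
  also have "\<dots> = b" using z b by simp
  finally show ?thesis .
qed

lemma ldiff: "a \<in> carrier R \<Longrightarrow> b \<in> carrier R \<Longrightarrow> c \<in> carrier R \<Longrightarrow> (a \<ominus> b) \<otimes> c = a \<otimes> c \<ominus> b \<otimes> c"
  by (simp add: minus_eq l_distr l_minus)

lemma rdiff: "a \<in> carrier R \<Longrightarrow> b \<in> carrier R \<Longrightarrow> c \<in> carrier R \<Longrightarrow> c \<otimes> (a \<ominus> b) = c \<otimes> a \<ominus> c \<otimes> b"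
  by (simp add: minus_eq r_distr r_minus)

lemma self_sub: "a \<in> carrier R \<Longrightarrow> a \<ominus> a = \<zero>"
  by (simp add: minus_eq r_neg)

lemma reduced:
  assumes ss: "semisimple_ring R" and tp: "two_primal R"
    and a: "a \<in> carrier R" and an: "a [^] (n::nat) = \<zero>"
  shows "a = \<zero>"
proof -
  let ?N = "nilpotents R"
  have NP: "?N = prime_radical R" using tp by (simp add: two_primal_def)
  have lN: "lid R ?N" unfolding lid_def
  proof (intro conjI ballI)
    show "?N \<subseteq> carrier R" by (auto simp: nilpotents_def)
    show "\<zero> \<in> ?N" unfolding nilpotents_def by (auto intro!: exI[of _ 1])
  next
    fix x y assume "x \<in> ?N" "y \<in> ?N"
    then have "x \<in> prime_radical R" "y \<in> prime_radical R" using NP by auto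
    then have xy: "x \<in> carrier R" "y \<in> carrier R" "\<And>P. prime_ideal_nc R P \<Longrightarrow> x \<in> P \<and> y \<in> P"
      unfolding prime_radical_def by auto
    have "\<And>P. prime_ideal_nc R P \<Longrightarrow> x \<oplus> y \<in> P"
    proof -
      fix P assume hP: "prime_ideal_nc R P"
      then have iP: "ideal P R" by (simp add: prime_ideal_nc_def)
      show "x \<oplus> y \<in> P" using additive_subgroup.a_closed[OF ideal.axioms(1)[OF iP]] xy(3)[OF hP] by blast
    qed
    then have "x \<oplus> y \<in> prime_radical R" unfolding prime_radical_def using xy by auto
    then show "x \<oplus> y \<in> ?N" using NP by auto
  next
    fix r x assume r: "r \<in> carrier R" and "x \<in> ?N"
    then have "x \<in> prime_radical R" using NP by auto
    then have xy: "x \<in> carrier R" "\<And>P. prime_ideal_nc R P \<Longrightarrow> x \<in> P"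
      unfolding prime_radical_def by auto
    have "\<And>P. prime_ideal_nc R P \<Longrightarrow> r \<otimes> x \<in> P"
    proof -
      fix P assume hP: "prime_ideal_nc R P"
      then have iP: "ideal P R" by (simp add: prime_ideal_nc_def)
      show "r \<otimes> x \<in> P" using ideal.I_l_closed[OF iP xy(2)[OF hP] r] .
    qed
    then have "r \<otimes> x \<in> prime_radical R" unfolding prime_radical_def using xy r by auto
    then show "r \<otimes> x \<in> ?N" using NP by auto
  qed
  obtain e where e: "e \<in> ?N" "\<forall>x\<in>?N. x \<otimes> e = x" using idem_gen[OF ss lN] by blast
  have ec: "e \<in> carrier R" using e by (auto simp: nilpotents_def)
  obtain m where m: "e [^] (m::nat) = \<zero>" using e by (auto simp: nilpotents_def)
  have ee: "e \<otimes> e = e" using e by blast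
  have pw: "e [^] Suc k = e" for k
    by (induction k) (use ee ec in auto)
  have aN: "a \<in> ?N" using a an by (auto simp: nilpotents_def)
  show ?thesis
  proof (cases m)
    case 0
    then have "\<one> = \<zero>" using m by simp
    have "a = a \<otimes> \<one>" using a by simp
    also have "\<dots> = \<zero>" using \<open>\<one> = \<zero>\<close> a by simp
    finally show ?thesis .
  next
    case (Suc k)
    then have "e = \<zero>" using m pw by simp
    then have "a \<otimes> \<zero> = a" using e(2) aN by simp
    then show ?thesis using a by simp
  qed
qed

lemma idem_central:
  assumes ss: "semisimple_ring R" and tp: "two_primal R"
    and ec: "e \<in> carrier R" and ee: "e \<otimes> e = e" and x: "x \<in> carrier R"
  shows "e \<otimes> x = x \<otimes> e"
proof -
  have sq: "u \<otimes> u = \<zero> \<Longrightarrow> u \<in> carrier R \<Longrightarrow> u = \<zero>" for u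
    using reduced[OF ss tp, of u 2] by (simp add: numeral_2_eq_2)
  have eee: "e \<otimes> (e \<otimes> y) = e \<otimes> y" if "y \<in> carrier R" for y
  proof -
    have "e \<otimes> (e \<otimes> y) = (e \<otimes> e) \<otimes> y" using that ec by (simp add: m_assoc)
    then show ?thesis using ee by simp
  qed
  define a where "a = e \<otimes> x"
  define b where "b = e \<otimes> x \<otimes> e"
  have ac: "a \<in> carrier R" and bc: "b \<in> carrier R" using ec x by (auto simp: a_def b_def)
  have ba: "b \<otimes> a = a \<otimes> a" unfolding a_def b_def using ec x ee
    by (simp add: m_assoc eee)
  have bb: "b \<otimes> b = a \<otimes> b" unfolding a_def b_def using ec x ee
    by (simp add: m_assoc eee)
  have "(a \<ominus> b) \<otimes> (a \<ominus> b) = (a \<otimes> a \<ominus> b \<otimes> a) \<ominus> (a \<otimes> b \<ominus> b \<otimes> b)"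
    using ac bc by (simp add: rdiff ldiff)
  also have "\<dots> = \<zero>" using ac bc ba bb by (simp add: self_sub)
  finally have "a \<ominus> b = \<zero>" using sq[of "a \<ominus> b"] ac bc by simp
  then have "a = b" using sub0_eq ac bc by blast
  define a' where "a' = x \<otimes> e"
  have a'c: "a' \<in> carrier R" using ec x by (auto simp: a'_def)
  have ab': "a' \<otimes> b = a' \<otimes> a'" unfolding a'_def b_def using ec x ee
    by (simp add: m_assoc eee)
  have bb': "b \<otimes> b = b \<otimes> a'" unfolding a'_def b_def using ec x ee
    by (simp add: m_assoc eee)
  have "(a' \<ominus> b) \<otimes> (a' \<ominus> b) = (a' \<otimes> a' \<ominus> b \<otimes> a') \<ominus> (a' \<otimes> b \<ominus> b \<otimes> b)"
    using a'c bc by (simp add: rdiff ldiff)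
  also have "\<dots> = \<zero>" using a'c bc ab' bb' by (simp add: self_sub)
  finally have "a' \<ominus> b = \<zero>" using sq[of "a' \<ominus> b"] a'c bc by simp
  then have "a' = b" using sub0_eq a'c bc by blast
  then show ?thesis using \<open>a = b\<close> by (simp add: a_def a'_def)
qed

end


lemma mspan_sub: "submod R M P \<Longrightarrow> Y \<subseteq> P \<Longrightarrow> mspan R M Y \<subseteq> P"
  by (auto simp: mspan_def)

lemma mspan_sup: "Y \<subseteq> carrier M \<Longrightarrow> Y \<subseteq> mspan R M Y"
  by (auto simp: mspan_def)

lemma lmod_facts:
  assumes "lmodule R M"
  shows "ring R" "abelian_group M"
    "\<And>a x. a \<in> carrier R \<Longrightarrow> x \<in> carrier M \<Longrightarrow> a \<odot>\<^bsub>M\<^esub> x \<in> carrier M"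
    "\<And>a b x. a \<in> carrier R \<Longrightarrow> b \<in> carrier R \<Longrightarrow> x \<in> carrier M \<Longrightarrow>
      (a \<oplus>\<^bsub>R\<^esub> b) \<odot>\<^bsub>M\<^esub> x = a \<odot>\<^bsub>M\<^esub> x \<oplus>\<^bsub>M\<^esub> b \<odot>\<^bsub>M\<^esub> x"
    "\<And>a b x. a \<in> carrier R \<Longrightarrow> b \<in> carrier R \<Longrightarrow> x \<in> carrier M \<Longrightarrow>
      (a \<otimes>\<^bsub>R\<^esub> b) \<odot>\<^bsub>M\<^esub> x = a \<odot>\<^bsub>M\<^esub> (b \<odot>\<^bsub>M\<^esub> x)"
    "\<And>x. x \<in> carrier M \<Longrightarrow> \<one>\<^bsub>R\<^esub> \<odot>\<^bsub>M\<^esub> x = x"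
  using assms by (auto simp: lmodule_def module_axioms_def)

lemma zero_smult:
  assumes "lmodule R M" "m \<in> carrier M"
  shows "\<zero>\<^bsub>R\<^esub> \<odot>\<^bsub>M\<^esub> m = \<zero>\<^bsub>M\<^esub>"
proof -
  interpret R: ring R using lmod_facts(1)[OF assms(1)] .
  interpret M: abelian_group M using lmod_facts(2)[OF assms(1)] .
  let ?x = "\<zero>\<^bsub>R\<^esub> \<odot>\<^bsub>M\<^esub> m"
  have xc: "?x \<in> carrier M" using lmod_facts(3)[OF assms(1)] assms(2) by simp
  have "?x \<oplus>\<^bsub>M\<^esub> ?x = ?x" using lmod_facts(4)[OF assms(1), of "\<zero>\<^bsub>R\<^esub>" "\<zero>\<^bsub>R\<^esub>" m] assms(2) by simp
  then have "?x \<oplus>\<^bsub>M\<^esub> ?x = ?x \<oplus>\<^bsub>M\<^esub> \<zero>\<^bsub>M\<^esub>" using xc by simp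
  then show ?thesis using xc M.add.l_cancel by blast
qed

lemma cprime_imp_prime:
  assumes M: "lmodule R M" and P: "cprime_submod R M P"
  shows "prime_submod R M P"
proof -
  have sP: "submod R M P" and nP: "\<not> prod_sm R M (carrier R) (carrier M) \<subseteq> P"
    and cP: "\<forall>r\<in>carrier R. \<forall>m\<in>carrier M. r \<odot>\<^bsub>M\<^esub> m \<in> P \<longrightarrow> m \<in> P \<or> smul_set M {r} (carrier M) \<subseteq> P"
    using P by (auto simp: cprime_submod_def)
  have "prod_sm R M A K \<subseteq> P \<Longrightarrow> ideal A R \<Longrightarrow> submod R M K \<Longrightarrow> \<not> K \<subseteq> P \<Longrightarrow>
        prod_sm R M A (carrier M) \<subseteq> P" for A K
  proof -
    assume AK: "prod_sm R M A K \<subseteq> P" and A: "ideal A R" and K: "submod R M K" and nK: "\<not> K \<subseteq> P"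
    obtain k where k: "k \<in> K" "k \<notin> P" using nK by blast
    have Ac: "A \<subseteq> carrier R" using A by (simp add: ideal_def additive_subgroup_def subgroup_def)
    have Kc: "K \<subseteq> carrier M" using K by (simp add: submod_def)
    have "smul_set M A (carrier M) \<subseteq> P"
    proof
      fix y assume "y \<in> smul_set M A (carrier M)"
      then obtain a x where y: "y = a \<odot>\<^bsub>M\<^esub> x" "a \<in> A" "x \<in> carrier M" by (auto simp: smul_set_def)
      have "a \<odot>\<^bsub>M\<^esub> k \<in> smul_set M A K" using y k by (auto simp: smul_set_def)
      moreover have "smul_set M A K \<subseteq> carrier M" using Ac Kc lmod_facts(3)[OF M]
        by (auto simp: smul_set_def)
      ultimately have "a \<odot>\<^bsub>M\<^esub> k \<in> P" using AK mspan_sup unfolding prod_sm_def by blast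
      then have "smul_set M {a} (carrier M) \<subseteq> P" using cP y k Ac Kc by blast
      then show "y \<in> P" using y by (auto simp: smul_set_def)
    qed
    then show ?thesis unfolding prod_sm_def using mspan_sub sP by blast
  qed
  then show ?thesis using sP nP by (auto simp: prime_submod_def)
qed

lemma prime_imp_cprime:
  assumes R: "ring R" and ss: "semisimple_ring R" and tp: "two_primal R"
    and M: "lmodule R M" and P: "prime_submod R M P"
  shows "cprime_submod R M P"
proof -
  interpret R: ring R by (rule R)
  have sP: "submod R M P" and nP: "\<not> prod_sm R M (carrier R) (carrier M) \<subseteq> P"
    and pP: "\<And>A K. ideal A R \<Longrightarrow> submod R M K \<Longrightarrow> prod_sm R M A K \<subseteq> P
              \<Longrightarrow> K \<subseteq> P \<or> prod_sm R M A (carrier M) \<subseteq> P"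
    using P by (auto simp: prime_submod_def)
  have Pc: "P \<subseteq> carrier M" and P0: "\<zero>\<^bsub>M\<^esub> \<in> P"
    and Padd: "\<And>x y. x \<in> P \<Longrightarrow> y \<in> P \<Longrightarrow> x \<oplus>\<^bsub>M\<^esub> y \<in> P"
    and Psm: "\<And>r x. r \<in> carrier R \<Longrightarrow> x \<in> P \<Longrightarrow> r \<odot>\<^bsub>M\<^esub> x \<in> P"
    using sP by (auto simp: submod_def)
  note F = lmod_facts[OF M]
  have "smul_set M {r} (carrier M) \<subseteq> P"
    if r: "r \<in> carrier R" and m: "m \<in> carrier M" and rm: "r \<odot>\<^bsub>M\<^esub> m \<in> P" and nm: "m \<notin> P" for r m
  proof -
    define L where "L = {a \<in> carrier R. a \<odot>\<^bsub>M\<^esub> m \<in> P}"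
    have lL: "lid R L" unfolding lid_def
    proof (intro conjI ballI)
      show "L \<subseteq> carrier R" by (auto simp: L_def)
      show "\<zero>\<^bsub>R\<^esub> \<in> L" using zero_smult[OF M m] P0 by (auto simp: L_def)
    next
      fix x y assume "x \<in> L" "y \<in> L"
      then show "x \<oplus>\<^bsub>R\<^esub> y \<in> L" using F(4)[OF _ _ m] Padd by (auto simp: L_def)
    next
      fix s x assume "s \<in> carrier R" "x \<in> L"
      then show "s \<otimes>\<^bsub>R\<^esub> x \<in> L" using F(5)[OF _ _ m] Psm by (auto simp: L_def)
    qed
    obtain e where e: "e \<in> L" "\<forall>x\<in>L. x \<otimes>\<^bsub>R\<^esub> e = x" using R.idem_gen[OF ss lL] by blast
    have ec: "e \<in> carrier R" using e by (auto simp: L_def)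
    have ee: "e \<otimes>\<^bsub>R\<^esub> e = e" using e by blast
    have cen: "\<And>t. t \<in> carrier R \<Longrightarrow> e \<otimes>\<^bsub>R\<^esub> t = t \<otimes>\<^bsub>R\<^esub> e"
      using R.idem_central[OF ss tp ec ee] by blast
    have Lc: "L \<subseteq> carrier R" by (auto simp: L_def)
    have rclosed: "a \<otimes>\<^bsub>R\<^esub> t \<in> L" if a: "a \<in> L" and t: "t \<in> carrier R" for a t
    proof -
      have ac: "a \<in> carrier R" using a Lc by auto
      have "a \<otimes>\<^bsub>R\<^esub> t = (a \<otimes>\<^bsub>R\<^esub> e) \<otimes>\<^bsub>R\<^esub> t" using e a by simp
      also have "\<dots> = a \<otimes>\<^bsub>R\<^esub> (t \<otimes>\<^bsub>R\<^esub> e)" using ac ec t cen by (simp add: R.m_assoc)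
      also have "\<dots> = (a \<otimes>\<^bsub>R\<^esub> t) \<otimes>\<^bsub>R\<^esub> e" using ac ec t by (simp add: R.m_assoc)
      finally have eq: "a \<otimes>\<^bsub>R\<^esub> t = (a \<otimes>\<^bsub>R\<^esub> t) \<otimes>\<^bsub>R\<^esub> e" .
      have "(a \<otimes>\<^bsub>R\<^esub> t) \<otimes>\<^bsub>R\<^esub> e \<in> L" using lL e(1) ac t by (auto simp: lid_def)
      then show ?thesis using eq by metis
    qed
    have iL: "ideal L R"
    proof (rule idealI[OF R])
      show "subgroup L (add_monoid R)"
      proof (rule R.add.subgroupI)
        show "L \<subseteq> carrier R" by (rule Lc)
        show "L \<noteq> {}" using e by blast
        show "\<And>a. a \<in> L \<Longrightarrow> \<ominus>\<^bsub>R\<^esub> a \<in> L" using R.lid_neg[OF lL] by blast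
        show "\<And>a b. a \<in> L \<Longrightarrow> b \<in> L \<Longrightarrow> a \<oplus>\<^bsub>R\<^esub> b \<in> L" using lL by (auto simp: lid_def)
      qed
      show "\<And>a x. a \<in> L \<Longrightarrow> x \<in> carrier R \<Longrightarrow> x \<otimes>\<^bsub>R\<^esub> a \<in> L" using lL by (auto simp: lid_def)
      show "\<And>a x. a \<in> L \<Longrightarrow> x \<in> carrier R \<Longrightarrow> a \<otimes>\<^bsub>R\<^esub> x \<in> L" by (rule rclosed)
    qed
    define K where "K = {t \<odot>\<^bsub>M\<^esub> m | t. t \<in> carrier R}"
    have sK: "submod R M K" unfolding submod_def
    proof (intro conjI ballI)
      show "K \<subseteq> carrier M" using F(3) m by (auto simp: K_def)
      show "\<zero>\<^bsub>M\<^esub> \<in> K" unfolding K_def using zero_smult[OF M m] by force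
    next
      fix x y assume "x \<in> K" "y \<in> K"
      then obtain s t where "x = s \<odot>\<^bsub>M\<^esub> m" "y = t \<odot>\<^bsub>M\<^esub> m" "s \<in> carrier R" "t \<in> carrier R"
        by (auto simp: K_def)
      then show "x \<oplus>\<^bsub>M\<^esub> y \<in> K" unfolding K_def using F(4)[OF _ _ m]
        by (intro CollectI exI[of _ "s \<oplus>\<^bsub>R\<^esub> t"]) auto
    next
      fix s x assume "s \<in> carrier R" "x \<in> K"
      then obtain t where "x = t \<odot>\<^bsub>M\<^esub> m" "t \<in> carrier R" by (auto simp: K_def)
      then show "s \<odot>\<^bsub>M\<^esub> x \<in> K" unfolding K_def using F(5)[OF _ _ m] \<open>s \<in> carrier R\<close>
        by (intro CollectI exI[of _ "s \<otimes>\<^bsub>R\<^esub> t"]) auto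
    qed
    have "smul_set M L K \<subseteq> P"
    proof
      fix y assume "y \<in> smul_set M L K"
      then obtain a t where y: "y = a \<odot>\<^bsub>M\<^esub> (t \<odot>\<^bsub>M\<^esub> m)" "a \<in> L" "t \<in> carrier R"
        by (auto simp: smul_set_def K_def)
      have "y = (a \<otimes>\<^bsub>R\<^esub> t) \<odot>\<^bsub>M\<^esub> m" using y F(5)[OF _ _ m] Lc by auto
      moreover have "a \<otimes>\<^bsub>R\<^esub> t \<in> L" using rclosed y by blast
      ultimately show "y \<in> P" by (auto simp: L_def)
    qed
    then have "prod_sm R M L K \<subseteq> P" unfolding prod_sm_def using mspan_sub sP by blast
    then have "K \<subseteq> P \<or> prod_sm R M L (carrier M) \<subseteq> P" using pP iL sK by blast
    moreover have "m \<in> K" unfolding K_def using F(6)[OF m] by (intro CollectI exI[of _ "\<one>\<^bsub>R\<^esub>"]) auto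
    ultimately have "prod_sm R M L (carrier M) \<subseteq> P" using nm by blast
    moreover have "smul_set M L (carrier M) \<subseteq> carrier M" using F(3) Lc by (auto simp: smul_set_def)
    ultimately have "smul_set M L (carrier M) \<subseteq> P" using mspan_sup unfolding prod_sm_def by blast
    moreover have "r \<in> L" using r rm by (auto simp: L_def)
    ultimately show ?thesis by (auto simp: smul_set_def)
  qed
  then show ?thesis using sP nP by (auto simp: cprime_submod_def)
qed

theorem proposition4p25:
  fixes R :: "('a, 'c) ring_scheme"
  assumes "ring R" and "semisimple_ring R" and "two_primal R"
  shows "complete_radical_formula R TYPE(('a, 'm) module) \<longleftrightarrow> radical_formula R TYPE(('a, 'm) module)"
proof -
  have eq: "beta_s R M N = beta_s_co R M N" if "lmodule R M" for M :: "('a, 'm) module" and N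
  proof -
    have "prime_submod R M = cprime_submod R M"
      using prime_imp_cprime[OF assms that] cprime_imp_prime[OF that] by blast
    then show ?thesis unfolding beta_s_def beta_s_co_def by (simp only:)
  qed
  show ?thesis unfolding complete_radical_formula_def radical_formula_def using eq by auto
qed

end
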